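(* Let $0<b<1$, $0<c<1$, and let $(\epsilon_n)_{n\geq1}$ satisfy $0<\epsilon_n<n$, $\epsilon_{n+1}\geq\epsilon_n+\frac{1}{2^{n/2}\ln 2}$ for all $n$, and $\epsilon_n/n\to0$. Put $t_n=2^{1-\epsilon_n/n}$, $a_n=c^{t_n^n}$ and $F_n(z,w)=(z^2+a_nw,\ a_nz)$. Let $\Omega=\{(z,w)\in\mathbb{C}^2:F_n\circ\cdots\circ F_1(z,w)\to0\}$, let $K\subseteq\Omega$ be compact, and set $\delta_n=\max\{|z_n|,|w_n|:(z,w)\in K\}$ where $(z_n,w_n)=F_n\circ\cdots\circ F_1(z,w)$. Suppose that for arbitrarily large $n$ there is an integer $k(n)\geq1$ with $t_{n+k(n)+1}\leq 2^{\frac{k(n)}{n+k(n)+1}}$. Then there exist arbitrarily large $n$ such that $\delta_{n+k}\leq a_{n+k+1}b^k$ for all $k\geq0$. *)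

theory Defs
  imports "HOL-Analysis.Analysis"
begin

definition tseq :: "(nat \<Rightarrow> real) \<Rightarrow> nat \<Rightarrow> real" where
  "tseq eps n = 2 powr (1 - eps n / real n)"

definition aseq :: "real \<Rightarrow> (nat \<Rightarrow> real) \<Rightarrow> nat \<Rightarrow> real" where
  "aseq c eps n = c powr (tseq eps n ^ n)"

definition Fmap :: "(nat \<Rightarrow> real) \<Rightarrow> nat \<Rightarrow> complex \<times> complex \<Rightarrow> complex \<times> complex" where
  "Fmap a n p = (fst p ^ 2 + complex_of_real (a n) * snd p, complex_of_real (a n) * fst p)"

fun orb :: "(nat \<Rightarrow> real) \<Rightarrow> nat \<Rightarrow> complex \<times> complex \<Rightarrow> complex \<times> complex" where
  "orb a 0 p = p"
| "orb a (Suc n) p = Fmap a (Suc n) (orb a n p)"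

definition basin :: "(nat \<Rightarrow> real) \<Rightarrow> (complex \<times> complex) set" where
  "basin a = {p. (\<lambda>n. orb a n p) \<longlonglongrightarrow> 0}"

definition delta :: "(nat \<Rightarrow> real) \<Rightarrow> (complex \<times> complex) set \<Rightarrow> nat \<Rightarrow> real" where
  "delta a K n = (SUP p\<in>K. max (cmod (fst (orb a n p))) (cmod (snd (orb a n p))))"

end

theory Submission
  imports Defs "HOL-Real_Asymp.Real_Asymp"
begin

definition MM :: "(nat \<Rightarrow> real) \<Rightarrow> nat \<Rightarrow> complex \<times> complex \<Rightarrow> real" where
  "MM a j p = max (cmod (fst (orb a j p))) (cmod (snd (orb a j p)))"

lemma MM_nonneg: "0 \<le> MM a j p" by (simp add: MM_def le_max_iff_disj)

lemma orb_step_bound: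
  assumes "a (Suc j) \<ge> 0"
  shows "MM a (Suc j) p \<le> (MM a j p)^2 + a (Suc j) * MM a j p"
proof -
  obtain z w where zw: "orb a j p = (z, w)" by (cases "orb a j p") auto
  define m where "m = MM a j p"
  have zm: "cmod z \<le> m" and wm: "cmod w \<le> m" using zw by (auto simp: m_def MM_def)
  have m0: "0 \<le> m" by (simp add: m_def MM_nonneg)
  have "cmod (z^2 + complex_of_real (a (Suc j)) * w) \<le> cmod z ^ 2 + a (Suc j) * cmod w"
    using assms by (metis abs_of_nonneg norm_mult norm_of_real norm_power norm_triangle_ineq)
  also have "\<dots> \<le> m^2 + a (Suc j) * m"
    using zm wm assms by (intro add_mono power_mono mult_left_mono) auto
  finally have 1: "cmod (z^2 + complex_of_real (a (Suc j)) * w) \<le> m^2 + a (Suc j) * m" .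
  have "cmod (complex_of_real (a (Suc j)) * z) = a (Suc j) * cmod z"
    using assms by (simp add: norm_mult)
  also have "\<dots> \<le> a (Suc j) * m" using zm assms by (intro mult_left_mono) auto
  also have "\<dots> \<le> m^2 + a (Suc j) * m" using m0 by simp
  finally have 2: "cmod (complex_of_real (a (Suc j)) * z) \<le> m^2 + a (Suc j) * m" .
  have meq: "m = max (cmod z) (cmod w)" using zw by (simp add: m_def MM_def)
  show ?thesis using 1 2 zw meq by (simp add: MM_def Fmap_def)
qed

lemma orb_cont: "continuous_on UNIV (orb a n)"
proof (induction n)
  case 0 then show ?case by (simp add: continuous_on_id')
next
  case (Suc n)
  have "continuous_on UNIV (\<lambda>p. Fmap a (Suc n) (orb a n p))"
    unfolding Fmap_def using Suc by (intro continuous_intros) auto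
  then show ?case by (simp add: o_def)
qed

lemma MM_cont: "continuous_on UNIV (MM a n)"
  unfolding MM_def using orb_cont[of a n] by (intro continuous_intros) auto


lemma aseq_eq: "j \<ge> 1 \<Longrightarrow> aseq c eps j = c powr (2 powr (real j - eps j))"
proof -
  assume j: "j \<ge> 1"
  have "(2 powr (1 - eps j / real j)) ^ j = 2 powr (real j * (1 - eps j / real j))"
    by (simp add: powr_power)
  also have "real j * (1 - eps j / real j) = real j - eps j" using j by (simp add: field_simps)
  finally show ?thesis by (simp add: aseq_def tseq_def)
qed

lemma key_one:
  fixes b c :: real and eps :: "nat \<Rightarrow> real"
  assumes b: "0 < b" "b < 1" and c: "0 < c" "c < 1" and j: "j \<ge> 1"
    and inc: "eps (Suc j) \<ge> eps j + 1 / (2 powr (real j / 2) * ln 2)"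
    and small: "eps j \<le> real j / 4"
    and big: "2 powr (real j / 4) \<ge> ln (b/2) / ln c"
  shows "2 * (c powr (2 powr (real j - eps j)))^2 \<le> b * c powr (2 powr (real (Suc j) - eps (Suc j)))"
proof -
  define u where "u = 2 powr (real j - eps j)"
  define v where "v = 2 powr (real (Suc j) - eps (Suc j))"
  define x where "x = 1 / 2 powr (real j / 2)"
  define D where "D = u * x"
  define T where "T = ln (b/2) / ln c"
  have u0: "u > 0" by (simp add: u_def)
  have p1: "1 \<le> 2 powr (real j / 2)" by (rule ge_one_powr_ge_zero) auto
  have x0: "x > 0" and x1: "x \<le> 1" using p1 by (auto simp: x_def)
  have ln2: "ln (2::real) > 0" by simp
  have "1 / (2 powr (real j / 2) * ln 2) = x / ln 2" by (simp add: x_def)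
  then have e: "real (Suc j) - eps (Suc j) \<le> (real j - eps j) + 1 + (- (x / ln 2))"
    using inc by simp
  have "v \<le> 2 powr ((real j - eps j) + 1 + (- (x / ln 2)))"
    unfolding v_def by (rule powr_mono[OF e]) auto
  also have "\<dots> = u * 2 * 2 powr (- (x / ln 2))"
    unfolding u_def by (subst powr_add, subst powr_add) simp
  also have "2 powr (- (x / ln 2)) = exp (- x)"
    using ln2 by (simp add: powr_def)
  finally have v1: "v \<le> u * 2 * exp (- x)" .
  have "1 + x \<le> exp x" by (rule exp_ge_add_one_self)
  then have "exp (- x) \<le> 1 / (1 + x)" using x0 by (simp add: exp_minus field_simps)
  also have "\<dots> \<le> 1 - x / 2" using x0 x1 by (simp add: field_simps)
  finally have "exp (- x) \<le> 1 - x / 2" .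
  with v1 u0 have "v \<le> u * 2 * (1 - x/2)"
    by (smt (verit) mult_left_mono)
  then have vD: "v \<le> 2 * u - D" by (simp add: D_def algebra_simps)
  have "D = 2 powr (real j - eps j - real j / 2)"
    unfolding D_def u_def x_def using powr_diff[of 2 "real j - eps j" "real j / 2"] by simp
  also have "\<dots> \<ge> 2 powr (real j / 4)" by (rule powr_mono) (use small in auto)
  finally have DT: "D \<ge> T" using big by (simp add: T_def)
  have cT: "c powr T = b / 2"
    using b c by (simp add: powr_def T_def)
  have cD: "c powr D \<le> b / 2"
    using powr_mono'[OF DT, of c] c cT by simp
  have "(c powr u)^2 = c powr (2*u)"
    by (simp add: power2_eq_square powr_add[symmetric])
  also have "\<dots> = c powr (2*u - D) * c powr D"
    by (simp add: powr_add[symmetric])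
  finally have sq: "(c powr u)^2 = c powr (2*u - D) * c powr D" .
  have "2 * (c powr u)^2 \<le> 2 * (c powr (2*u - D) * (b/2))"
    unfolding sq using cD by (intro mult_left_mono) auto
  also have "\<dots> = b * c powr (2*u - D)" by simp
  also have "\<dots> \<le> b * c powr v"
    using powr_mono'[OF vD, of c] c b by (intro mult_left_mono) auto
  finally show ?thesis by (simp add: u_def v_def)
qed


lemma prop_step:
  assumes b: "0 < b" "b \<le> 1" and key: "\<forall>j\<ge>N0. 2 * (A j)^2 \<le> b * A (Suc j)"
    and j: "Suc j \<ge> N0" and A0: "A (Suc j) \<ge> 0"
    and h: "MM A j p \<le> A (Suc j) * b^i"
  shows "MM A (Suc j) p \<le> A (Suc (Suc j)) * b^(Suc i)"
proof -
  define m where "m = MM A j p"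
  define a where "a = A (Suc j)"
  have m0: "0 \<le> m" by (simp add: m_def MM_nonneg)
  have mh: "m \<le> a * b^i" using h by (simp add: m_def a_def)
  have bi: "0 \<le> b^i" "b^i \<le> 1" using b by (auto simp: power_le_one)
  have "m^2 \<le> (a * b^i)^2" using m0 mh by (intro power_mono) auto
  also have "\<dots> = a^2 * (b^i * b^i)" by (simp add: power2_eq_square)
  also have "\<dots> \<le> a^2 * b^i" using bi by (intro mult_left_mono) (auto simp: mult_left_le)
  finally have 1: "m^2 \<le> a^2 * b^i" .
  have "a * m \<le> a * (a * b^i)" using mh A0 by (intro mult_left_mono) (auto simp: a_def)
  then have 2: "a * m \<le> a^2 * b^i" by (simp add: power2_eq_square algebra_simps)
  have "MM A (Suc j) p \<le> m^2 + a * m" using orb_step_bound[of A j, OF A0] by (simp add: m_def a_def)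
  also have "\<dots> \<le> 2 * a^2 * b^i" using 1 2 by simp
  also have "\<dots> \<le> b * A (Suc (Suc j)) * b^i"
    using key j bi unfolding a_def by (intro mult_right_mono) auto
  finally show ?thesis by (simp add: algebra_simps)
qed

lemma iter:
  assumes b: "0 < b" "b \<le> 1" and key: "\<forall>j\<ge>N0. 2 * (A j)^2 \<le> b * A (Suc j)"
    and j: "Suc j \<ge> N0" and A0: "\<And>n. A n \<ge> 0"
    and h: "MM A j p \<le> A (Suc j)"
  shows "MM A (j + i) p \<le> A (Suc (j + i)) * b^i"
proof (induction i)
  case 0 then show ?case using h by simp
next
  case (Suc i)
  have "MM A (Suc (j + i)) p \<le> A (Suc (Suc (j + i))) * b^(Suc i)"
    by (rule prop_step[OF b key _ A0 Suc]) (use j in simp)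
  then show ?case by simp
qed

lemma mono_MM:
  assumes Ac: "\<And>n. A (Suc n) \<le> c" and A0: "\<And>n. A n \<ge> 0" and rc: "\<rho> + c \<le> 1"
    and h: "MM A j p \<le> \<rho>"
  shows "MM A (j + i) p \<le> MM A j p"
proof (induction i)
  case 0 then show ?case by simp
next
  case (Suc i)
  define m where "m = MM A (j + i) p"
  have m0: "0 \<le> m" by (simp add: m_def MM_nonneg)
  have "m \<le> \<rho>" using Suc h by (simp add: m_def)
  then have mc: "m + A (Suc (j+i)) \<le> 1" using Ac[of "j+i"] rc by simp
  have "MM A (Suc (j + i)) p \<le> m^2 + A (Suc (j+i)) * m" using orb_step_bound[of A "j+i", OF A0] by (simp add: m_def)
  also have "\<dots> = m * (m + A (Suc (j+i)))" by (simp add: power2_eq_square algebra_simps)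
  also have "\<dots> \<le> m" using mc m0 by (simp add: mult_left_le)
  finally show ?case using Suc by (simp add: m_def)
qed

lemma pow2: "((y::real)^(2^i))^2 = y^(2^Suc i)"
  by (simp add: power_mult[symmetric] mult.commute)

lemma Q_lemma:
  assumes b: "0 < b" "b \<le> 1" and key: "\<forall>j\<ge>N0. 2 * (A j)^2 \<le> b * A (Suc j)"
    and N: "N \<ge> N0" and A0: "\<And>n. A n \<ge> 0"
  shows "MM A (N + i) p \<le> A (Suc (N + i)) \<or> 2 * MM A (N + i) p \<le> (2 * MM A N p)^(2^i)"
proof (induction i)
  case 0 then show ?case by simp
next
  case (Suc i)
  show ?case
  proof (cases "MM A (N + i) p \<le> A (Suc (N + i))")
    case True
    have "MM A (Suc (N + i)) p \<le> A (Suc (Suc (N + i))) * b^(Suc 0)"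
      by (rule prop_step[OF b key _ A0]) (use N True in auto)
    also have "\<dots> \<le> A (Suc (Suc (N + i)))" using b A0 by (simp add: mult_left_le)
    finally show ?thesis by simp
  next
    case False
    define m where "m = MM A (N + i) p"
    have m0: "0 \<le> m" by (simp add: m_def MM_nonneg)
    have am: "A (Suc (N+i)) \<le> m" using False by (simp add: m_def)
    have IH: "2 * m \<le> (2 * MM A N p)^(2^i)" using Suc False by (simp add: m_def)
    have "MM A (Suc (N + i)) p \<le> m^2 + A (Suc (N+i)) * m" using orb_step_bound[of A "N+i", OF A0] by (simp add: m_def)
    also have "\<dots> \<le> m^2 + m * m" using am m0 by (simp add: mult_right_mono)
    finally have s: "MM A (Suc (N + i)) p \<le> m^2 + m * m" .
    have "(2*m)^2 = 4*(m*m)" "m^2 = m*m" by (simp_all add: power2_eq_square)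
    then have "2 * MM A (Suc (N + i)) p \<le> (2*m)^2" using s m0 by linarith
    also have "\<dots> \<le> ((2 * MM A N p)^(2^i))^2" using IH m0 by (intro power_mono) auto
    also have "\<dots> = (2 * MM A N p)^(2^(Suc i))" by (rule pow2)
    finally show ?thesis by simp
  qed
qed

lemma uniform_small:
  assumes K: "compact K" "K \<subseteq> basin A" and r: "\<rho> > 0"
    and Ac: "\<And>n. A (Suc n) \<le> c" and A0: "\<And>n. A n \<ge> 0" and rc: "\<rho> + c \<le> 1"
  shows "\<exists>N\<ge>L. \<forall>p\<in>K. MM A N p \<le> \<rho>"
proof -
  define U where "U = (\<lambda>j. {p. MM A j p < \<rho>})"
  have opn: "open (U j)" for j
    unfolding U_def by (rule open_Collect_less) (auto intro: MM_cont continuous_intros)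
  have cov: "K \<subseteq> \<Union> (U ` {L..})"
  proof
    fix p assume "p \<in> K"
    then have "(\<lambda>n. orb A n p) \<longlonglongrightarrow> 0" using K by (auto simp: basin_def)
    then have "(\<lambda>n. MM A n p) \<longlonglongrightarrow> max (cmod (fst (0::complex\<times>complex))) (cmod (snd (0::complex\<times>complex)))"
      unfolding MM_def by (intro tendsto_intros)
    then have "(\<lambda>n. MM A n p) \<longlonglongrightarrow> 0" by simp
    then have "eventually (\<lambda>n. MM A n p < \<rho>) sequentially" using r by (rule order_tendstoD)
    then obtain N where "\<forall>n\<ge>N. MM A n p < \<rho>" by (auto simp: eventually_sequentially)
    then have "p \<in> U (max N L)" by (simp add: U_def)
    then show "p \<in> \<Union> (U ` {L..})" by auto
  qed
  obtain C' where C': "C' \<subseteq> {L..}" "finite C'" "K \<subseteq> \<Union> (U ` C')"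
    using compactE_image[OF K(1) opn cov] by blast
  define N where "N = Max (insert L C')"
  have NL: "N \<ge> L" using C' by (simp add: N_def)
  have "MM A N p \<le> \<rho>" if pK: "p \<in> K" for p
  proof -
    obtain j where jc: "j \<in> C'" and pj: "p \<in> U j" using C'(3) pK by blast
    have jN: "j \<le> N" using jc C' by (simp add: N_def)
    have h: "MM A j p \<le> \<rho>" using pj by (simp add: U_def)
    have "MM A (j + (N - j)) p \<le> MM A j p" by (rule mono_MM[OF Ac A0 rc h])
    then show ?thesis using jN h by simp
  qed
  then show ?thesis using NL by blast
qed


theorem lemma4p3:
  fixes b c :: real and eps :: "nat \<Rightarrow> real" and K :: "(complex \<times> complex) set"
  assumes "0 < b" "b < 1" "0 < c" "c < 1"
    and "\<And>n. n \<ge> 1 \<Longrightarrow> 0 < eps n \<and> eps n < real n"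
    and "\<And>n. n \<ge> 1 \<Longrightarrow> eps (n + 1) \<ge> eps n + 1 / (2 powr (real n / 2) * ln 2)"
    and "(\<lambda>n. eps n / real n) \<longlonglongrightarrow> 0"
    and "compact K" "K \<noteq> {}" "K \<subseteq> basin (aseq c eps)"
    and "\<forall>N. \<exists>n\<ge>N. n \<ge> 1 \<and> (\<exists>k::nat. k \<ge> 1 \<and>
           tseq eps (n + k + 1) \<le> 2 powr (real k / real (n + k + 1)))"
  shows "\<forall>N. \<exists>n\<ge>N. n \<ge> 1 \<and> (\<forall>k::nat.
           delta (aseq c eps) K (n + k) \<le> aseq c eps (n + k + 1) * b ^ k)"
proof -
  note b = assms(1,2) and c = assms(3,4) and epsb = assms(5) and inc = assms(6)
    and lim = assms(7) and K = assms(8,9,10) and hyp = assms(11)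
  define A where "A = aseq c eps"
  have A0: "A n \<ge> 0" for n by (simp add: A_def aseq_def)
  have Ac: "A (Suc n) \<le> c" for n
  proof -
    have "0 < real (Suc n) - eps (Suc n)" using epsb[of "Suc n"] by simp
    then have e1: "1 \<le> 2 powr (real (Suc n) - eps (Suc n))"
      by (intro ge_one_powr_ge_zero) auto
    have "A (Suc n) = c powr (2 powr (real (Suc n) - eps (Suc n)))"
      unfolding A_def by (rule aseq_eq) simp
    also have "\<dots> \<le> c powr 1" by (rule powr_mono'[OF e1]) (use c in auto)
    finally show ?thesis using c by simp
  qed
  obtain N0 where N0: "N0 \<ge> 1" "\<forall>j\<ge>N0. 2 * (A j)^2 \<le> b * A (Suc j)"
  proof -
    have ev1: "eventually (\<lambda>j. eps j / real j < 1/4) sequentially"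
      using lim by (rule order_tendstoD) simp
    have "filterlim (\<lambda>j::nat. 2 powr (real j / 4)) at_top at_top" by real_asymp
    then have ev2: "eventually (\<lambda>j. ln (b/2) / ln c \<le> 2 powr (real j / 4)) sequentially"
      by (simp add: filterlim_at_top)
    have ev3: "eventually (\<lambda>j::nat. j \<ge> 1) sequentially" by (rule eventually_ge_at_top)
    obtain N where N: "\<forall>j\<ge>N. eps j / real j < 1/4 \<and> ln (b/2) / ln c \<le> 2 powr (real j / 4) \<and> j \<ge> 1"
      using eventually_conj[OF ev1 eventually_conj[OF ev2 ev3]] by (auto simp: eventually_sequentially)
    show ?thesis
    proof (rule that[of "max N 1"])
      show "\<forall>j\<ge>max N 1. 2 * (A j)^2 \<le> b * A (Suc j)"
      proof (intro allI impI)
        fix j assume j: "max N 1 \<le> j"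
        then have Nj: "eps j / real j < 1/4" "ln (b/2) / ln c \<le> 2 powr (real j / 4)" "j \<ge> 1"
          using N by auto
        have sm: "eps j \<le> real j / 4" using Nj(1,3) by (simp add: field_simps)
        have inc': "eps (Suc j) \<ge> eps j + 1 / (2 powr (real j / 2) * ln 2)"
          using inc[OF Nj(3)] by simp
        have "2 * (c powr (2 powr (real j - eps j)))^2 \<le> b * c powr (2 powr (real (Suc j) - eps (Suc j)))"
          by (rule key_one[OF b c Nj(3) inc' sm Nj(2)])
        then show "2 * (A j)^2 \<le> b * A (Suc j)"
          unfolding A_def using aseq_eq[of j c eps] aseq_eq[of "Suc j" c eps] Nj(3) by simp
      qed
    qed simp
  qed
  define \<rho> where "\<rho> = min (c/2) (1 - c)"
  have r0: "\<rho> > 0" and rc: "\<rho> + c \<le> 1" and r2: "2 * \<rho> \<le> c" using c by (auto simp: \<rho>_def min_def)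
  have b1: "b \<le> 1" using b by simp
  show ?thesis
  proof
    fix L
    obtain N where NL: "N \<ge> max L N0" and NK: "\<forall>p\<in>K. MM A N p \<le> \<rho>"
    proof -
      have KA: "K \<subseteq> basin A" using K(3) by (simp add: A_def)
      show ?thesis using uniform_small[where A=A and c=c and L="max L N0", OF K(1) KA r0 Ac A0 rc] that by blast
    qed
    obtain n k where n: "n \<ge> N" "n \<ge> 1" and k: "k \<ge> 1"
      and tk: "tseq eps (n + k + 1) \<le> 2 powr (real k / real (n + k + 1))"
      using hyp by blast
    define m where "m = n + k + 1"
    have m0: "real m > 0" by (simp add: m_def)
    have "1 - eps m / real m \<le> real k / real m"
      using tk by (simp add: tseq_def m_def)
    then have "real m * (1 - eps m / real m) \<le> real m * (real k / real m)"
      by (rule mult_left_mono) simp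
    then have E: "real m - eps m \<le> real k" using m0 by (simp add: right_diff_distrib)
    have Am: "c powr (2 ^ k) \<le> A m"
    proof -
      have "2 powr (real m - eps m) \<le> 2 powr (real k)" by (rule powr_mono[OF E]) auto
      also have "\<dots> = 2 ^ k" by (simp add: powr_realpow)
      finally have "2 powr (real m - eps m) \<le> 2 ^ k" .
      then have "c powr (2 ^ k) \<le> c powr (2 powr (real m - eps m))"
        by (rule powr_mono') (use c in auto)
      also have "\<dots> = A m" unfolding A_def by (rule aseq_eq[symmetric]) (simp add: m_def)
      finally show ?thesis .
    qed
    have hit: "MM A (n + k) p \<le> A (Suc (n + k))" if pK: "p \<in> K" for p
    proof -
      define i where "i = n + k - N"
      have Ni: "N + i = n + k" using n by (simp add: i_def)
      have ki: "k \<le> i" using n by (simp add: i_def)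
      have NN0: "N \<ge> N0" using NL by simp
      from Q_lemma[OF b(1) b1 N0(2) NN0 A0, of i p]
      show ?thesis
      proof
        assume "MM A (N + i) p \<le> A (Suc (N + i))" then show ?thesis by (simp add: Ni)
      next
        assume h: "2 * MM A (N + i) p \<le> (2 * MM A N p)^(2^i)"
        define y where "y = 2 * MM A N p"
        have y0: "0 \<le> y" by (simp add: y_def MM_nonneg)
        have yc: "y \<le> c" using NK pK r2 by (auto simp: y_def)
        have "y^(2^i) \<le> c^(2^i)" using y0 yc by (intro power_mono)
        also have "\<dots> \<le> c^(2^k)" by (rule power_decreasing) (use c ki in auto)
        also have "\<dots> = c powr (2 ^ k)" using c powr_realpow[of c "2^k"] by simp
        also have "\<dots> \<le> A m" by (rule Am)
        finally have "2 * MM A (n + k) p \<le> A m" using h Ni by (simp add: y_def)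
        then show ?thesis using MM_nonneg[of A "n+k" p] by (simp add: m_def)
      qed
    qed
    have "delta A K (n + k + i) \<le> A (n + k + i + 1) * b ^ i" for i
    proof -
      have "MM A (n + k + i) p \<le> A (Suc (n + k + i)) * b ^ i" if pK: "p \<in> K" for p
        by (rule iter[OF b(1) b1 N0(2) _ A0 hit[OF pK]]) (use n NL in simp)
      then show ?thesis
        unfolding delta_def MM_def[symmetric] using K(2) by (intro cSUP_least) auto
    qed
    then show "\<exists>n'\<ge>L. n' \<ge> 1 \<and> (\<forall>i. delta (aseq c eps) K (n' + i) \<le> aseq c eps (n' + i + 1) * b ^ i)"
      using n NL by (intro exI[of _ "n + k"]) (auto simp: A_def)
  qed
qed

end
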